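(* In the construction below, let $P_0,\dots,P_K$ be partitions of $X$ such that every part of $P_k$ has diameter at most $\tau^{-k}$, and for $x\in X$ define $\psi_k(x):=\mathsf f_k\big(B_X(P_k(x),\tau^{-k}/2)\big)$, where $P_k(x)$ is the part of $P_k$ containing $x$. Then for every $x\in X$, $\langle(\psi_0(x),0),(\psi_1(x),1),\dots,(\psi_K(x),K)\rangle$ is a directed path in $\mathcal D$, i.e. $(\psi_k(x),\psi_{k+1}(x))\in A_k$ for all $k\in\{0,\dots,K-1\}$.
   Context: Construction. Let $(X,d)$ be a metric space with $n=|X|\ge2$ and $\mathrm{diam}(X)=1$. For $S\subseteq X$, $r\ge0$: $B_X(S,r):=\{x\in X:\exists s\in S,\ d(x,s)\le r\}$ and $B_X(x,r):=B_X(\{x\},r)$. Let $\varepsilon_0:=\min\{d(x,y):x\ne y\}$, $\tau:=12$, $K:=1+\lceil\log_\tau(1/\varepsilon_0)\rceil$. For $\eta>0$ the greedy $\eta$-net is built as: $N_0=\emptyset$; for $j\ge1$, $S_j:=X\setminus B_X(N_{j-1},\eta)$; if $S_j=\emptyset$ output $N_{j-1}$; else pick $x_j\in S_j$ maximizing $|B_X(x,\eta/3)|$ and set $N_j=N_{j-1}\cup\{x_j\}$. For $k=0,\dots,K$ let $U_k$ be the greedy $\tau^{-k}$-net. For $k<K$, $A_k$ is the set of pairs $(u,u')\in U_k\times U_{k+1}$ with (i) $d(u,u')\le4\tau^{-k}$ and (ii) $|B_X(u,\tau^{-k}/3)|\ge\max\{|B_X(w,\tau^{-k}/3)|:w\in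 B_X(u',6\tau^{-(k+1)})\}$. The directed graph $\mathcal D$ has vertex set $\{(u,k):u\in U_k,\ 0\le k\le K\}$ and arcs $((u,k),(u',k+1))$ for $(u,u')\in A_k$. For nonempty $S\subseteq X$, $\mathsf f_k(S)$ denotes a (fixed) maximizer of $|B_X(y,\tau^{-k}/3)|$ over $y\in B_X(S,2\tau^{-k})\cap U_k$. *)

theory Defs
  imports Complex_Main "HOL-Library.Disjoint_Sets"
begin

definition metric_on :: "'a set \<Rightarrow> ('a \<Rightarrow> 'a \<Rightarrow> real) \<Rightarrow> bool" where
  "metric_on X d \<longleftrightarrow>
     (\<forall>x\<in>X. \<forall>y\<in>X. 0 \<le> d x y \<and> (d x y = 0 \<longleftrightarrow> x = y) \<and> d x y = d y x) \<and>
     (\<forall>x\<in>X. \<forall>y\<in>X. \<forall>z\<in>X. d x z \<le> d x y + d y z)"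

definition diam :: "'a set \<Rightarrow> ('a \<Rightarrow> 'a \<Rightarrow> real) \<Rightarrow> real" where
  "diam X d = Max {d x y | x y. x \<in> X \<and> y \<in> X}"

definition eps0 :: "'a set \<Rightarrow> ('a \<Rightarrow> 'a \<Rightarrow> real) \<Rightarrow> real" where
  "eps0 X d = Min {d x y | x y. x \<in> X \<and> y \<in> X \<and> x \<noteq> y}"

definition ballS :: "'a set \<Rightarrow> ('a \<Rightarrow> 'a \<Rightarrow> real) \<Rightarrow> 'a set \<Rightarrow> real \<Rightarrow> 'a set" where
  "ballS X d S r = {x \<in> X. \<exists>s\<in>S. d x s \<le> r}"

definition ball1 :: "'a set \<Rightarrow> ('a \<Rightarrow> 'a \<Rightarrow> real) \<Rightarrow> 'a \<Rightarrow> real \<Rightarrow> 'a set" where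
  "ball1 X d x r = ballS X d {x} r"

definition tau :: real where "tau = 12"

definition scale :: "nat \<Rightarrow> real" where "scale k = inverse (tau ^ k)"

definition Kpar :: "'a set \<Rightarrow> ('a \<Rightarrow> 'a \<Rightarrow> real) \<Rightarrow> nat" where
  "Kpar X d = nat (1 + \<lceil>log tau (1 / eps0 X d)\<rceil>)"

text \<open>A run of the greedy eta-net procedure: the list of chosen points x_1,...,x_m.\<close>
definition greedy_run :: "'a set \<Rightarrow> ('a \<Rightarrow> 'a \<Rightarrow> real) \<Rightarrow> real \<Rightarrow> 'a list \<Rightarrow> bool" where
  "greedy_run X d eta xs \<longleftrightarrow>
     (\<forall>j < length xs.
        xs ! j \<in> X - ballS X d (set (take j xs)) eta \<and>
        (\<forall>y \<in> X - ballS X d (set (take j xs)) eta.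
            card (ball1 X d y (eta / 3)) \<le> card (ball1 X d (xs ! j) (eta / 3)))) \<and>
     X - ballS X d (set xs) eta = {}"

text \<open>N is an output of the greedy eta-net procedure (for some admissible tie-breaking).\<close>
definition greedy_net :: "'a set \<Rightarrow> ('a \<Rightarrow> 'a \<Rightarrow> real) \<Rightarrow> real \<Rightarrow> 'a set \<Rightarrow> bool" where
  "greedy_net X d eta N \<longleftrightarrow> (\<exists>xs. greedy_run X d eta xs \<and> N = set xs)"

definition arcs :: "'a set \<Rightarrow> ('a \<Rightarrow> 'a \<Rightarrow> real) \<Rightarrow> (nat \<Rightarrow> 'a set) \<Rightarrow> nat \<Rightarrow> ('a \<times> 'a) set" where
  "arcs X d U k = {(u, u'). u \<in> U k \<and> u' \<in> U (Suc k) \<and>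
      d u u' \<le> 4 * scale k \<and>
      card (ball1 X d u (scale k / 3)) \<ge>
        Max ((\<lambda>w. card (ball1 X d w (scale k / 3))) ` ball1 X d u' (6 * scale (Suc k)))}"

definition is_f_k :: "'a set \<Rightarrow> ('a \<Rightarrow> 'a \<Rightarrow> real) \<Rightarrow> (nat \<Rightarrow> 'a set) \<Rightarrow> nat \<Rightarrow> ('a set \<Rightarrow> 'a) \<Rightarrow> bool" where
  "is_f_k X d U k fk \<longleftrightarrow>
     (\<forall>S. S \<subseteq> X \<and> S \<noteq> {} \<longrightarrow>
        fk S \<in> ballS X d S (2 * scale k) \<inter> U k \<and>
        (\<forall>y \<in> ballS X d S (2 * scale k) \<inter> U k.
            card (ball1 X d y (scale k / 3)) \<le> card (ball1 X d (fk S) (scale k / 3))))"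

definition part_of :: "'a set set \<Rightarrow> 'a \<Rightarrow> 'a set" where
  "part_of P x = (THE p. p \<in> P \<and> x \<in> p)"

end

theory Submission
  imports Defs
begin

lemma part_of_mem:
  assumes "partition_on X P" "x \<in> X"
  shows "part_of P x \<in> P \<and> x \<in> part_of P x"
proof -
  have "X = \<Union>P" by (rule partition_onD1[OF assms(1)])
  with assms(2) obtain p where p: "p \<in> P" "x \<in> p" by auto
  have u: "q = p" if q: "q \<in> P" "x \<in> q" for q
  proof (rule ccontr)
    assume "q \<noteq> p"
    then have "q \<inter> p = {}"
      using disjointD[OF partition_onD2[OF assms(1)] q(1) p(1)] by simp
    with q p(2) show False by auto
  qed
  have "part_of P x = p" unfolding part_of_def
    using p u by (intro the_equality) blast+
  thus ?thesis using p by simp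
qed

lemma greedy_cover:
  assumes "greedy_net X d eta N" "w \<in> X"
  shows "\<exists>y\<in>N. d w y \<le> eta \<and> card (ball1 X d w (eta/3)) \<le> card (ball1 X d y (eta/3))"
proof -
  obtain xs where g: "greedy_run X d eta xs" and N: "N = set xs"
    using assms(1) unfolding greedy_net_def by blast
  have "w \<in> ballS X d (set xs) eta" using g assms(2) unfolding greedy_run_def by blast
  then obtain s where "s \<in> set xs" "d w s \<le> eta" unfolding ballS_def by blast
  then have ex: "\<exists>j. j < length xs \<and> d w (xs ! j) \<le> eta" by (metis in_set_conv_nth)
  define j where "j = (LEAST j. j < length xs \<and> d w (xs ! j) \<le> eta)"
  have j: "j < length xs \<and> d w (xs ! j) \<le> eta" unfolding j_def by (rule LeastI_ex[OF ex])
  have lt: "\<And>i. i < j \<Longrightarrow> \<not> d w (xs ! i) \<le> eta"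
    using j not_less_Least[of _ "\<lambda>j. j < length xs \<and> d w (xs ! j) \<le> eta"] unfolding j_def
    by (metis order.strict_trans)
  have "w \<in> X - ballS X d (set (take j xs)) eta"
  proof
    show "w \<in> X" by fact
    show "w \<notin> ballS X d (set (take j xs)) eta"
    proof
      assume "w \<in> ballS X d (set (take j xs)) eta"
      then obtain s where "s \<in> set (take j xs)" "d w s \<le> eta" unfolding ballS_def by blast
      then obtain i where "i < length (take j xs)" "take j xs ! i = s" by (metis in_set_conv_nth)
      then have "i < j" "xs ! i = s" by auto
      with lt \<open>d w s \<le> eta\<close> show False by blast
    qed
  qed
  then have "card (ball1 X d w (eta/3)) \<le> card (ball1 X d (xs ! j) (eta/3))"
    using g j unfolding greedy_run_def by blast
  moreover have "xs ! j \<in> N" using j N by simp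
  ultimately show ?thesis using j by blast
qed

lemma greedy_sub:
  assumes "greedy_net X d eta N" shows "N \<subseteq> X"
proof
  fix y assume "y \<in> N"
  obtain xs where g: "greedy_run X d eta xs" and N: "N = set xs"
    using assms unfolding greedy_net_def by blast
  from \<open>y \<in> N\<close> N obtain j where j: "j < length xs" "xs ! j = y" by (metis in_set_conv_nth)
  with g show "y \<in> X" unfolding greedy_run_def by blast
qed

theorem lemma3p8:
  fixes X :: "'a set" and d :: "'a \<Rightarrow> 'a \<Rightarrow> real"
    and U :: "nat \<Rightarrow> 'a set" and f :: "nat \<Rightarrow> 'a set \<Rightarrow> 'a"
    and P :: "nat \<Rightarrow> 'a set set"
  assumes "finite X" and "card X \<ge> 2" and "metric_on X d" and "diam X d = 1"
    and "\<And>k. k \<le> Kpar X d \<Longrightarrow> greedy_net X d (scale k) (U k)"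
    and "\<And>k. k \<le> Kpar X d \<Longrightarrow> is_f_k X d U k (f k)"
    and "\<And>k. k \<le> Kpar X d \<Longrightarrow> partition_on X (P k)"
    and "\<And>k p a b. k \<le> Kpar X d \<Longrightarrow> p \<in> P k \<Longrightarrow> a \<in> p \<Longrightarrow> b \<in> p \<Longrightarrow> d a b \<le> scale k"
  shows "\<forall>x\<in>X. \<forall>k < Kpar X d.
           (f k (ballS X d (part_of (P k) x) (scale k / 2)),
            f (Suc k) (ballS X d (part_of (P (Suc k)) x) (scale (Suc k) / 2))) \<in> arcs X d U k"
proof (intro ballI allI impI)
  fix x k assume x: "x \<in> X" and k: "k < Kpar X d"
  have tri: "\<And>a b c. a \<in> X \<Longrightarrow> b \<in> X \<Longrightarrow> c \<in> X \<Longrightarrow> d a c \<le> d a b + d b c"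
    using assms(3) unfolding metric_on_def by blast
  have sym: "\<And>a b. a \<in> X \<Longrightarrow> b \<in> X \<Longrightarrow> d a b = d b a"
    using assms(3) unfolding metric_on_def by blast
  have sc: "scale (Suc k) = scale k / 12" "scale k > 0"
    unfolding scale_def tau_def by (auto simp: field_simps)
  have gen: "f j (ballS X d (part_of (P j) x) (scale j / 2)) \<in> U j \<inter> X \<and>
      d (f j (ballS X d (part_of (P j) x) (scale j / 2))) x \<le> 7/2 * scale j \<and>
      (\<forall>y \<in> ballS X d (ballS X d (part_of (P j) x) (scale j / 2)) (2 * scale j) \<inter> U j.
            card (ball1 X d y (scale j / 3)) \<le> card (ball1 X d (f j (ballS X d (part_of (P j) x) (scale j / 2))) (scale j / 3)))
      \<and> x \<in> ballS X d (part_of (P j) x) (scale j / 2)"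
    if j: "j \<le> Kpar X d" for j
  proof -
    define p where "p = part_of (P j) x"
    define S where "S = ballS X d p (scale j / 2)"
    have pm: "p \<in> P j" "x \<in> p" using part_of_mem[OF assms(7)[OF j] x] p_def by auto
    have pX: "p \<subseteq> X" using partition_onD1[OF assms(7)[OF j]] pm by blast
    have sj: "scale j > 0" unfolding scale_def tau_def by simp
    have d0: "d x x = 0" using assms(3) x unfolding metric_on_def by blast
    have xS: "x \<in> S" unfolding S_def ballS_def using pm x d0 sj by force
    have SX: "S \<subseteq> X" unfolding S_def ballS_def by blast
    have F: "f j S \<in> ballS X d S (2 * scale j) \<inter> U j \<and>
        (\<forall>y \<in> ballS X d S (2 * scale j) \<inter> U j.
            card (ball1 X d y (scale j / 3)) \<le> card (ball1 X d (f j S) (scale j / 3)))"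
      using assms(6)[OF j] SX xS unfolding is_f_k_def by blast
    then obtain s where s: "s \<in> S" "d (f j S) s \<le> 2 * scale j" and uX: "f j S \<in> X"
      unfolding ballS_def by blast
    then obtain a where a: "a \<in> p" "d s a \<le> scale j / 2" "s \<in> X" unfolding S_def ballS_def by blast
    have "d a x \<le> scale j" using assms(8)[OF j pm(1) a(1) pm(2)] .
    have "d (f j S) x \<le> d (f j S) s + d s x" using tri uX a(3) x by blast
    also have "d s x \<le> d s a + d a x" using tri a pX x by blast
    finally have "d (f j S) x \<le> 7/2 * scale j" using s a \<open>d a x \<le> scale j\<close> by linarith
    thus ?thesis using F uX xS unfolding S_def p_def by blast
  qed
  define u where "u = f k (ballS X d (part_of (P k) x) (scale k / 2))"
  define u' where "u' = f (Suc k) (ballS X d (part_of (P (Suc k)) x) (scale (Suc k) / 2))"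
  have gk: "u \<in> U k \<inter> X" "d u x \<le> 7/2 * scale k"
    "\<forall>y \<in> ballS X d (ballS X d (part_of (P k) x) (scale k / 2)) (2 * scale k) \<inter> U k.
            card (ball1 X d y (scale k / 3)) \<le> card (ball1 X d u (scale k / 3))"
    "x \<in> ballS X d (part_of (P k) x) (scale k / 2)"
    using gen[of k] k unfolding u_def by auto
  have gk': "u' \<in> U (Suc k) \<inter> X" "d u' x \<le> 7/2 * scale (Suc k)"
    using gen[of "Suc k"] k unfolding u'_def by auto
  have dist: "d u u' \<le> 4 * scale k"
  proof -
    have "d u u' \<le> d u x + d x u'" using tri gk(1) gk'(1) x by blast
    also have "d x u' = d u' x" using sym gk'(1) x by blast
    finally show ?thesis using gk(2) gk'(2) sc by simp
  qed
  have maxle: "Max ((\<lambda>w. card (ball1 X d w (scale k / 3))) ` ball1 X d u' (6 * scale (Suc k)))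
      \<le> card (ball1 X d u (scale k / 3))"
  proof (rule Max.boundedI)
    show "finite ((\<lambda>w. card (ball1 X d w (scale k / 3))) ` ball1 X d u' (6 * scale (Suc k)))"
      using assms(1) unfolding ball1_def ballS_def by simp
    have "d u' u' = 0" using assms(3) gk'(1) unfolding metric_on_def by blast
    hence "u' \<in> ball1 X d u' (6 * scale (Suc k))" using gk'(1) sc unfolding ball1_def ballS_def by simp
    thus "(\<lambda>w. card (ball1 X d w (scale k / 3))) ` ball1 X d u' (6 * scale (Suc k)) \<noteq> {}" by blast
  next
    fix c assume "c \<in> (\<lambda>w. card (ball1 X d w (scale k / 3))) ` ball1 X d u' (6 * scale (Suc k))"
    then obtain w where w: "w \<in> X" "d w u' \<le> 6 * scale (Suc k)"
      and c: "c = card (ball1 X d w (scale k / 3))" unfolding ball1_def ballS_def by auto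
    obtain y where y: "y \<in> U k" "d w y \<le> scale k"
      "card (ball1 X d w (scale k / 3)) \<le> card (ball1 X d y (scale k / 3))"
      using greedy_cover[OF assms(5) w(1), of k] k by auto
    have yX: "y \<in> X" using greedy_sub[OF assms(5)[of k]] k y(1) by auto
    have "d y x \<le> d y w + d w x" using tri yX w(1) x by blast
    also have "d w x \<le> d w u' + d u' x" using tri w(1) gk'(1) x by blast
    also have "d y w = d w y" using sym yX w(1) by blast
    finally have "d y x \<le> 2 * scale k" using y(2) w(2) gk'(2) sc by simp
    hence "y \<in> ballS X d (ballS X d (part_of (P k) x) (scale k / 2)) (2 * scale k)"
      using yX gk(4) unfolding ballS_def by blast
    with gk(3) y(1) have "card (ball1 X d y (scale k / 3)) \<le> card (ball1 X d u (scale k / 3))" by blast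
    with y(3) show "c \<le> card (ball1 X d u (scale k / 3))" using c by linarith
  qed
  show "(u, u') \<in> arcs X d U k" unfolding arcs_def using gk(1) gk'(1) dist maxle by simp
qed

end
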